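(* Let $U,V\in U(2^n)$ satisfy $D(U,V)\le\epsilon$. Then for every $P\in\mathcal{P}_n$, $$D(UPU^T, VPV^T)\le 2\epsilon,$$ where the transpose is taken in the computational basis.
   Context: For $d\times d$ unitaries ($d=2^n$), $D(U_1,U_2)=\frac{1}{\sqrt{2d^2}}\|U_1\otimes U_1^*-U_2\otimes U_2^*\|_2$ with $\|A\|_2=\sqrt{\mathrm{Tr}[A^\dagger A]}$ the Frobenius norm; equivalently $D(U_1,U_2)=\sqrt{1-\frac{1}{d^2}|\mathrm{Tr}[U_1U_2^\dagger]|^2}$. $\mathcal{P}_n$ is the $n$-qubit Pauli group, consisting of $i^k P_1\otimes\cdots\otimes P_n$ with $P_j\in\{I,X,Y,Z\}$, $k\in\{0,1,2,3\}$. *)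

theory Defs
  imports "Jordan_Normal_Form.Matrix"
begin

definition cconj :: "complex mat \<Rightarrow> complex mat" where
  "cconj A = map_mat cnj A"

definition dagger :: "complex mat \<Rightarrow> complex mat" where
  "dagger A = transpose_mat (cconj A)"

definition unitary :: "nat \<Rightarrow> complex mat \<Rightarrow> bool" where
  "unitary d U \<longleftrightarrow> U \<in> carrier_mat d d \<and> U * dagger U = 1\<^sub>m d \<and> dagger U * U = 1\<^sub>m d"

definition kron :: "complex mat \<Rightarrow> complex mat \<Rightarrow> complex mat" where
  "kron A B = mat (dim_row A * dim_row B) (dim_col A * dim_col B)
     (\<lambda>(i,j). A $$ (i div dim_row B, j div dim_col B) * B $$ (i mod dim_row B, j mod dim_col B))"

definition mtrace :: "complex mat \<Rightarrow> complex" where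
  "mtrace A = (\<Sum>i<dim_row A. A $$ (i,i))"

definition frob :: "complex mat \<Rightarrow> real" where
  "frob A = sqrt (Re (mtrace (dagger A * A)))"

definition Dist :: "complex mat \<Rightarrow> complex mat \<Rightarrow> real" where
  "Dist U1 U2 = frob (kron U1 (cconj U1) - kron U2 (cconj U2)) / sqrt (2 * (real (dim_row U1))^2)"

definition pI :: "complex mat" where "pI = mat_of_rows_list 2 [[1,0],[0,1]]"
definition pX :: "complex mat" where "pX = mat_of_rows_list 2 [[0,1],[1,0]]"
definition pY :: "complex mat" where "pY = mat_of_rows_list 2 [[0,-\<i>],[\<i>,0]]"
definition pZ :: "complex mat" where "pZ = mat_of_rows_list 2 [[1,0],[0,-1]]"

fun kron_list :: "complex mat list \<Rightarrow> complex mat" where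
  "kron_list [] = 1\<^sub>m 1"
| "kron_list (A # As) = kron A (kron_list As)"

definition pauli_group :: "nat \<Rightarrow> complex mat set" where
  "pauli_group n = {(\<i> ^ k) \<cdot>\<^sub>m kron_list ps | k ps.
      k < 4 \<and> length ps = n \<and> set ps \<subseteq> {pI, pX, pY, pZ}}"

end

theory Submission
  imports Defs "HOL-Analysis.L2_Norm"
begin

lemma sum_prod_split:
  fixes f :: "nat \<Rightarrow> 'a::comm_monoid_add"
  shows "(\<Sum>t<m*n. f t) = (\<Sum>a<m. \<Sum>b<n. f (a*n+b))"
proof -
  have "(\<Sum>t<m*n. f t) = (\<Sum>a<m. sum f {a*n..<a*n+n})"
    by (simp add: sum.nat_group)
  also have "\<dots> = (\<Sum>a<m. \<Sum>b<n. f (a*n+b))"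
  proof (rule sum.cong[OF refl])
    fix a assume "a \<in> {..<m}"
    show "sum f {a*n..<a*n+n} = (\<Sum>b<n. f (a*n+b))"
      using sum.shift_bounds_nat_ivl[of f 0 "a*n" n]
      by (simp add: atLeast0LessThan add.commute)
  qed
  finally show ?thesis .
qed

lemma divmod_bound: "(i::nat) < a*b \<Longrightarrow> i div b < a \<and> i mod b < b"
proof -
  assume h: "i < a*b"
  then have "b > 0" by (cases "b = 0") auto
  then show ?thesis using h by (simp add: less_mult_imp_div_less)
qed

lemma pair_bound: "(a::nat) < m \<Longrightarrow> b < n \<Longrightarrow> a*n+b < m*n"
proof -
  assume "a < m" "b < n"
  then have "a*n+b < a*n + n" by simp
  also have "\<dots> = Suc a * n" by simp
  also have "\<dots> \<le> m * n" using \<open>a<m\<close> by (intro mult_le_mono1) simp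
  finally show ?thesis .
qed

lemma index_kron[simp]:
  "i < dim_row A * dim_row B \<Longrightarrow> j < dim_col A * dim_col B \<Longrightarrow>
   kron A B $$ (i,j) = A $$ (i div dim_row B, j div dim_col B) * B $$ (i mod dim_row B, j mod dim_col B)"
  by (simp add: kron_def)

lemma dim_kron[simp]: "dim_row (kron A B) = dim_row A * dim_row B" "dim_col (kron A B) = dim_col A * dim_col B"
  by (simp_all add: kron_def)

lemma kron_carrier: "A \<in> carrier_mat a b \<Longrightarrow> B \<in> carrier_mat c d \<Longrightarrow> kron A B \<in> carrier_mat (a*c) (b*d)"
proof -
  assume "A \<in> carrier_mat a b" "B \<in> carrier_mat c d"
  then have "dim_row A = a" "dim_col A = b" "dim_row B = c" "dim_col B = d" by auto
  then show ?thesis by (intro carrier_matI) simp_all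
qed

lemma kron_mult:
  assumes A: "A \<in> carrier_mat ra ca" and C: "C \<in> carrier_mat ca cc"
    and B: "B \<in> carrier_mat rb cb" and D: "D \<in> carrier_mat cb cd"
  shows "kron (A*C) (B*D) = kron A B * kron C D"
proof (rule eq_matI)
  fix i j assume i: "i < dim_row (kron A B * kron C D)" and j: "j < dim_col (kron A B * kron C D)"
  have i1: "i div rb < ra" "i mod rb < rb" using i A B divmod_bound[of i ra rb] by auto
  have j1: "j div cd < cc" "j mod cd < cd" using j C D divmod_bound[of j cc cd] by auto
  have "(kron A B * kron C D) $$ (i,j) = (\<Sum>t<ca*cb. kron A B $$ (i,t) * kron C D $$ (t,j))"
    using i j A B C D by (simp add: scalar_prod_def lessThan_atLeast0)
  also have "\<dots> = (\<Sum>a<ca. \<Sum>b<cb. kron A B $$ (i,a*cb+b) * kron C D $$ (a*cb+b,j))"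
    by (rule sum_prod_split)
  also have "\<dots> = (\<Sum>a<ca. \<Sum>b<cb. (A $$ (i div rb, a) * C $$ (a, j div cd)) * (B $$ (i mod rb, b) * D $$ (b, j mod cd)))"
  proof (rule sum.cong[OF refl], rule sum.cong[OF refl])
    fix a b assume a: "a \<in> {..<ca}" and b: "b \<in> {..<cb}"
    have t: "a*cb+b < ca*cb" using a b pair_bound by simp
    show "kron A B $$ (i,a*cb+b) * kron C D $$ (a*cb+b,j) = (A $$ (i div rb, a) * C $$ (a, j div cd)) * (B $$ (i mod rb, b) * D $$ (b, j mod cd))"
      using i j A B C D a b t by simp
  qed
  also have "\<dots> = (\<Sum>a<ca. A $$ (i div rb, a) * C $$ (a, j div cd)) * (\<Sum>b<cb. B $$ (i mod rb, b) * D $$ (b, j mod cd))"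
    by (simp add: sum_product mult_ac)
  also have "\<dots> = kron (A*C) (B*D) $$ (i,j)"
    using i j A B C D i1 j1 by (simp add: scalar_prod_def lessThan_atLeast0)
  finally show "kron (A*C) (B*D) $$ (i,j) = (kron A B * kron C D) $$ (i,j)" by simp
qed (use A B C D in auto)


lemma dim_cconj[simp]: "dim_row (cconj A) = dim_row A" "dim_col (cconj A) = dim_col A"
  by (simp_all add: cconj_def)
lemma index_cconj[simp]: "i < dim_row A \<Longrightarrow> j < dim_col A \<Longrightarrow> cconj A $$ (i,j) = cnj (A $$ (i,j))"
  by (simp add: cconj_def)
lemma cconj_carrier[simp]: "(cconj A \<in> carrier_mat a b) = (A \<in> carrier_mat a b)"
  by (simp add: cconj_def)
lemma dim_dagger[simp]: "dim_row (dagger A) = dim_col A" "dim_col (dagger A) = dim_row A"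
  by (simp_all add: dagger_def)
lemma index_dagger[simp]: "i < dim_col A \<Longrightarrow> j < dim_row A \<Longrightarrow> dagger A $$ (i,j) = cnj (A $$ (j,i))"
  by (simp add: dagger_def)
lemma dagger_carrier[simp]: "(dagger A \<in> carrier_mat a b) = (A \<in> carrier_mat b a)"
  by (simp add: dagger_def)

lemma cconj_mult: assumes "A \<in> carrier_mat a b" "B \<in> carrier_mat b c"
  shows "cconj (A*B) = cconj A * cconj B"
  by (rule eq_matI) (use assms in \<open>auto simp: scalar_prod_def cnj_sum\<close>)

lemma dagger_mult: assumes A: "A \<in> carrier_mat a b" and B: "B \<in> carrier_mat b c"
  shows "dagger (A*B) = dagger B * dagger A"
  unfolding dagger_def cconj_mult[OF A B]
  by (rule transpose_mult[of _ a b]) (use A B in auto)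

lemma dagger_dagger[simp]: "dagger (dagger A) = A"
  by (rule eq_matI) auto

lemma cconj_transpose: "cconj (transpose_mat A) = transpose_mat (cconj A)"
  by (rule eq_matI) auto

lemma dagger_transpose: "dagger (transpose_mat A) = transpose_mat (dagger A)"
  by (rule eq_matI) auto

lemma dagger_one[simp]: "dagger (1\<^sub>m n) = 1\<^sub>m n"
  by (rule eq_matI) auto

lemma dagger_kron: "dagger (kron A B) = kron (dagger A) (dagger B)"
  by (rule eq_matI) (auto simp: divmod_bound)

lemma cconj_kron: "cconj (kron A B) = kron (cconj A) (cconj B)"
  by (rule eq_matI) (auto simp: divmod_bound)

lemma transpose_kron: "transpose_mat (kron A B) = kron (transpose_mat A) (transpose_mat B)"
  by (rule eq_matI) (auto simp: divmod_bound)

lemma kron_one: "kron (1\<^sub>m a) (1\<^sub>m b) = 1\<^sub>m (a*b)"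
proof (rule eq_matI)
  fix i j assume i: "i < dim_row (1\<^sub>m (a*b))" and j: "j < dim_col (1\<^sub>m (a*b))"
  have "(i div b = j div b \<and> i mod b = j mod b) = (i = j)"
    by (metis div_mult_mod_eq)
  then show "kron (1\<^sub>m a) (1\<^sub>m b) $$ (i, j) = 1\<^sub>m (a * b) $$ (i, j)"
    using i j divmod_bound[of i a b] divmod_bound[of j a b] by auto
qed auto


lemma unitaryD: assumes "unitary d U"
  shows "U \<in> carrier_mat d d" "U * dagger U = 1\<^sub>m d" "dagger U * U = 1\<^sub>m d"
  using assms by (auto simp: unitary_def)

lemma unitary_mult: assumes A: "unitary d A" and B: "unitary d B"
  shows "unitary d (A*B)"
proof -
  have Ac: "A \<in> carrier_mat d d" and Bc: "B \<in> carrier_mat d d" using A B unitaryD by auto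
  have dAc: "dagger A \<in> carrier_mat d d" and dBc: "dagger B \<in> carrier_mat d d" using Ac Bc by auto
  have 1: "A * B * dagger (A*B) = 1\<^sub>m d"
  proof -
    have "A * B * dagger (A*B) = A * B * (dagger B * dagger A)" using dagger_mult[OF Ac Bc] by simp
    also have "\<dots> = A * (B * dagger B) * dagger A"
      using Ac Bc dAc dBc by (simp add: assoc_mult_mat[of _ d d _ d _ d])
    also have "\<dots> = 1\<^sub>m d" using unitaryD[OF A] unitaryD[OF B] Ac by simp
    finally show ?thesis .
  qed
  have 2: "dagger (A*B) * (A * B) = 1\<^sub>m d"
  proof -
    have "dagger (A*B) * (A * B) = (dagger B * dagger A) * (A * B)" using dagger_mult[OF Ac Bc] by simp
    also have "\<dots> = dagger B * (dagger A * A) * B"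
      using Ac Bc dAc dBc by (simp add: assoc_mult_mat[of _ d d _ d _ d])
    also have "\<dots> = 1\<^sub>m d" using unitaryD[OF A] unitaryD[OF B] Bc by simp
    finally show ?thesis .
  qed
  show ?thesis using 1 2 Ac Bc by (simp add: unitary_def)
qed

lemma unitary_kron: assumes A: "unitary a A" and B: "unitary b B"
  shows "unitary (a*b) (kron A B)"
proof -
  have Ac: "A \<in> carrier_mat a a" and Bc: "B \<in> carrier_mat b b" using A B unitaryD by auto
  have dAc: "dagger A \<in> carrier_mat a a" and dBc: "dagger B \<in> carrier_mat b b" using Ac Bc by auto
  have "kron A B * dagger (kron A B) = kron (A * dagger A) (B * dagger B)"
    by (simp add: dagger_kron kron_mult[OF Ac dAc Bc dBc])
  also have "\<dots> = 1\<^sub>m (a*b)" using unitaryD[OF A] unitaryD[OF B] kron_one by simp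
  finally have 1: "kron A B * dagger (kron A B) = 1\<^sub>m (a*b)" .
  have "dagger (kron A B) * kron A B = kron (dagger A * A) (dagger B * B)"
    by (simp add: dagger_kron kron_mult[OF dAc Ac dBc Bc])
  also have "\<dots> = 1\<^sub>m (a*b)" using unitaryD[OF A] unitaryD[OF B] kron_one by simp
  finally have 2: "dagger (kron A B) * kron A B = 1\<^sub>m (a*b)" .
  show ?thesis using 1 2 kron_carrier[OF Ac Bc] by (simp add: unitary_def)
qed

lemma smult_smult_mat: "a \<cdot>\<^sub>m (b \<cdot>\<^sub>m A) = (a * b :: complex) \<cdot>\<^sub>m A"
  by (rule eq_matI) auto

lemma one_smult_mat': "(1::complex) \<cdot>\<^sub>m A = A"
  by (rule eq_matI) auto

lemma dagger_smult: "dagger (c \<cdot>\<^sub>m A) = cnj c \<cdot>\<^sub>m dagger A"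
  by (rule eq_matI) auto

lemma unitary_smult: assumes A: "unitary d A" and c: "c * cnj c = 1"
  shows "unitary d (c \<cdot>\<^sub>m A)"
proof -
  have Ac: "A \<in> carrier_mat d d" using A unitaryD by auto
  have dAc: "dagger A \<in> carrier_mat d d" using Ac by auto
  have "(c \<cdot>\<^sub>m A) * dagger (c \<cdot>\<^sub>m A) = (c * cnj c) \<cdot>\<^sub>m (A * dagger A)"
    unfolding dagger_smult using Ac dAc
    by (simp add: mult_smult_assoc_mat[of _ d d _ d] mult_smult_distrib[of _ d d _ d] smult_smult_mat mult.commute)
  moreover have "dagger (c \<cdot>\<^sub>m A) * (c \<cdot>\<^sub>m A) = (c * cnj c) \<cdot>\<^sub>m (dagger A * A)"
    unfolding dagger_smult using Ac dAc
    by (simp add: mult_smult_assoc_mat[of _ d d _ d] mult_smult_distrib[of _ d d _ d] smult_smult_mat)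
  ultimately show ?thesis using c Ac unitaryD[OF A] by (simp add: unitary_def one_smult_mat')
qed

lemma unitary_transpose: assumes A: "unitary d A" shows "unitary d (transpose_mat A)"
proof -
  have Ac: "A \<in> carrier_mat d d" using A unitaryD by auto
  have dAc: "dagger A \<in> carrier_mat d d" using Ac by auto
  have "transpose_mat A * dagger (transpose_mat A) = transpose_mat (dagger A * A)"
    unfolding dagger_transpose using transpose_mult[OF dAc Ac] by simp
  moreover have "dagger (transpose_mat A) * transpose_mat A = transpose_mat (A * dagger A)"
    unfolding dagger_transpose using transpose_mult[OF Ac dAc] by simp
  ultimately show ?thesis using Ac unitaryD[OF A] by (simp add: unitary_def)
qed


lemma lt2: "(i::nat) < 2 \<Longrightarrow> i = 0 \<or> i = 1" by auto

lemma unitary2I: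
  assumes "M = mat_of_rows_list 2 [[a,b],[c,e]]"
    and "a * cnj a + b * cnj b = 1" "c * cnj c + e * cnj e = 1"
    and "a * cnj c + b * cnj e = 0"
    and "cnj a * a + cnj c * c = 1" "cnj b * b + cnj e * e = 1"
    and "cnj a * b + cnj c * e = 0"
  shows "unitary 2 M"
proof -
  have "dim_row M = 2" "dim_col M = 2" using assms(1) by (simp_all add: mat_of_rows_list_def)
  then have Mc: "M \<in> carrier_mat 2 2" by (intro carrier_matI)
  have e: "\<And>i j. i < 2 \<Longrightarrow> j < 2 \<Longrightarrow> M $$ (i,j) = [[a,b],[c,e]] ! i ! j"
    using assms(1) by (simp add: mat_of_rows_list_def)
  have s2: "\<And>f. (\<Sum>k\<in>{0..<2::nat}. f k) = f 0 + f 1" by (simp add: numeral_2_eq_2)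
  have "M * dagger M = 1\<^sub>m 2"
  proof (rule eq_matI)
    fix i j assume "i < dim_row (1\<^sub>m 2)" "j < dim_col (1\<^sub>m 2)"
    then have "i < 2" "j < 2" by auto
    then show "(M * dagger M) $$ (i,j) = 1\<^sub>m 2 $$ (i,j)"
      using Mc e assms(2-7) lt2[of i] lt2[of j]
      apply (simp add: scalar_prod_def s2)
      apply (elim disjE) apply (simp_all add: mult.commute)
      by (metis complex_cnj_cnj complex_cnj_mult complex_cnj_add complex_cnj_zero mult.commute)
  qed (use Mc in auto)
  moreover have "dagger M * M = 1\<^sub>m 2"
  proof (rule eq_matI)
    fix i j assume "i < dim_row (1\<^sub>m 2)" "j < dim_col (1\<^sub>m 2)"
    then have "i < 2" "j < 2" by auto
    then show "(dagger M * M) $$ (i,j) = 1\<^sub>m 2 $$ (i,j)"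
      using Mc e assms(2-7) lt2[of i] lt2[of j]
      apply (simp add: scalar_prod_def s2)
      apply (elim disjE) apply (simp_all add: mult.commute)
      by (metis complex_cnj_cnj complex_cnj_mult complex_cnj_add complex_cnj_zero mult.commute)
  qed (use Mc in auto)
  ultimately show ?thesis using Mc by (simp add: unitary_def)
qed

lemma unitary_paulis: "unitary 2 pI" "unitary 2 pX" "unitary 2 pY" "unitary 2 pZ"
  apply (rule unitary2I[OF pI_def]; simp) apply (rule unitary2I[OF pX_def]; simp)
  apply (rule unitary2I[OF pY_def]; simp) by (rule unitary2I[OF pZ_def]; simp)


lemma unitary_one: "unitary n (1\<^sub>m n)"
  by (simp add: unitary_def)

lemma unitary_kron_list: "set ps \<subseteq> {pI, pX, pY, pZ} \<Longrightarrow> unitary (2 ^ length ps) (kron_list ps)"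
proof (induction ps)
  case Nil then show ?case by (simp add: unitary_one)
next
  case (Cons A As)
  then have "unitary 2 A" using unitary_paulis by auto
  then have "unitary (2 * 2 ^ length As) (kron A (kron_list As))"
    using Cons by (intro unitary_kron) auto
  then show ?case by simp
qed

lemma unitary_pauli: assumes "P \<in> pauli_group n" shows "unitary (2^n) P"
proof -
  obtain k ps where P: "P = (\<i> ^ k) \<cdot>\<^sub>m kron_list ps" and l: "length ps = n" and s: "set ps \<subseteq> {pI, pX, pY, pZ}"
    using assms by (auto simp: pauli_group_def)
  have c: "\<i> ^ k * cnj (\<i> ^ k) = 1"
    by (simp add: power_mult_distrib[symmetric])
  show ?thesis unfolding P using unitary_smult[OF unitary_kron_list[OF s] c] l by simp
qed

definition fsq :: "complex mat \<Rightarrow> real" where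
  "fsq A = (\<Sum>i<dim_col A. \<Sum>k<dim_row A. (cmod (A $$ (k,i)))^2)"

lemma frob_fsq: "frob A = sqrt (fsq A)"
proof -
  have "Re (mtrace (dagger A * A)) = (\<Sum>i<dim_col A. \<Sum>k<dim_row A. Re (cnj (A $$ (k,i)) * A $$ (k,i)))"
    by (simp add: mtrace_def scalar_prod_def lessThan_atLeast0)
  also have "\<dots> = fsq A" unfolding fsq_def
  proof (rule sum.cong[OF refl], rule sum.cong[OF refl])
    fix i k
    show "Re (cnj (A $$ (k,i)) * A $$ (k,i)) = (cmod (A $$ (k,i)))^2"
      using complex_norm_square[of "A $$ (k,i)"] by (metis Re_complex_of_real mult.commute)
  qed
  finally show ?thesis by (simp add: frob_def)
qed

lemma mtrace_comm: assumes A: "A \<in> carrier_mat a b" and B: "B \<in> carrier_mat b a"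
  shows "mtrace (A*B) = mtrace (B*A)"
proof -
  have "mtrace (A*B) = (\<Sum>i<a. \<Sum>k<b. A $$ (i,k) * B $$ (k,i))"
    using A B by (simp add: mtrace_def scalar_prod_def lessThan_atLeast0)
  also have "\<dots> = (\<Sum>k<b. \<Sum>i<a. B $$ (k,i) * A $$ (i,k))"
    by (subst sum.swap) (simp add: mult.commute)
  also have "\<dots> = mtrace (B*A)"
    using A B by (simp add: mtrace_def scalar_prod_def lessThan_atLeast0)
  finally show ?thesis .
qed

lemma frob_left_unitary: assumes M: "unitary d M" and N: "N \<in> carrier_mat d m"
  shows "frob (M * N) = frob N"
proof -
  have Mc: "M \<in> carrier_mat d d" using unitaryD[OF M] by auto
  have dMc: "dagger M \<in> carrier_mat d d" and dNc: "dagger N \<in> carrier_mat m d" using Mc N by auto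
  have "dagger (M*N) * (M*N) = dagger N * (dagger M * M) * N"
    using dagger_mult[OF Mc N] Mc N dMc dNc by (simp add: assoc_mult_mat[of _ m d _ d _ m] assoc_mult_mat[of _ d d _ d _ m])
  also have "\<dots> = dagger N * N" using unitaryD[OF M] dNc by simp
  finally show ?thesis by (simp add: frob_def)
qed

lemma frob_right_unitary: assumes M: "unitary d M" and N: "N \<in> carrier_mat m d"
  shows "frob (N * M) = frob N"
proof -
  have Mc: "M \<in> carrier_mat d d" using unitaryD[OF M] by auto
  have dMc: "dagger M \<in> carrier_mat d d" and dNc: "dagger N \<in> carrier_mat d m" using Mc N by auto
  have X: "dagger N * N \<in> carrier_mat d d" using dNc N by auto
  have "dagger (N*M) * (N*M) = dagger M * ((dagger N * N) * M)"
  proof -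
    have NM: "N * M \<in> carrier_mat m d" using N Mc by auto
    have "dagger (N*M) * (N*M) = dagger M * dagger N * (N * M)" using dagger_mult[OF N Mc] by simp
    also have "\<dots> = dagger M * (dagger N * (N * M))" using assoc_mult_mat[OF dMc dNc NM] .
    also have "dagger N * (N * M) = (dagger N * N) * M" using assoc_mult_mat[OF dNc N Mc] by simp
    finally show ?thesis .
  qed
  then have "mtrace (dagger (N*M) * (N*M)) = mtrace (((dagger N * N) * M) * dagger M)"
    using mtrace_comm[of "dagger M" d d "(dagger N * N) * M"] dMc X Mc by simp
  also have "\<dots> = mtrace (dagger N * N)"
    using X Mc dMc unitaryD[OF M] right_mult_one_mat[OF X] by (simp add: assoc_mult_mat[of _ d d _ d _ d])
  finally show ?thesis by (simp add: frob_def)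
qed

lemma frob_transpose: "frob (transpose_mat A) = frob A"
  unfolding frob_fsq fsq_def by (simp, subst sum.swap, simp)

lemma fsq_L2: "sqrt (fsq A) = L2_set (\<lambda>p. cmod (A $$ (snd p, fst p))) ({..<dim_col A} \<times> {..<dim_row A})"
  unfolding fsq_def L2_set_def by (simp add: sum.cartesian_product case_prod_beta)

lemma frob_triangle: assumes A: "A \<in> carrier_mat r c" and B: "B \<in> carrier_mat r c"
  shows "frob (A + B) \<le> frob A + frob B"
proof -
  let ?S = "{..<c} \<times> {..<r}"
  have "frob (A + B) = L2_set (\<lambda>p. cmod ((A+B) $$ (snd p, fst p))) ?S"
    unfolding frob_fsq fsq_L2 using A B by simp
  also have "\<dots> = L2_set (\<lambda>p. cmod (A $$ (snd p, fst p) + B $$ (snd p, fst p))) ?S"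
    using A B by (intro L2_set_cong) auto
  also have "\<dots> \<le> L2_set (\<lambda>p. cmod (A $$ (snd p, fst p)) + cmod (B $$ (snd p, fst p))) ?S"
    by (intro L2_set_mono norm_triangle_ineq) auto
  also have "\<dots> \<le> L2_set (\<lambda>p. cmod (A $$ (snd p, fst p))) ?S + L2_set (\<lambda>p. cmod (B $$ (snd p, fst p))) ?S"
    by (rule L2_set_triangle_ineq)
  also have "\<dots> = frob A + frob B"
    unfolding frob_fsq fsq_L2 using A B by simp
  finally show ?thesis .
qed


lemma cconj_one[simp]: "cconj (1\<^sub>m n) = 1\<^sub>m n"
  by (rule eq_matI) auto

lemma unitary_cconj: assumes W: "unitary d W" shows "unitary d (cconj W)"
proof -
  have Wc: "W \<in> carrier_mat d d" using unitaryD[OF W] by auto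
  have dWc: "dagger W \<in> carrier_mat d d" using Wc by auto
  have e: "dagger (cconj W) = cconj (dagger W)" by (rule eq_matI) auto
  have 1: "cconj W * cconj (dagger W) = 1\<^sub>m d"
    using cconj_mult[OF Wc dWc, symmetric] unitaryD(2)[OF W] by simp
  have 2: "cconj (dagger W) * cconj W = 1\<^sub>m d"
    using cconj_mult[OF dWc Wc, symmetric] unitaryD(3)[OF W] by simp
  show ?thesis unfolding unitary_def e using 1 2 Wc by simp
qed

lemma K_mult: assumes A: "A \<in> carrier_mat d d" and B: "B \<in> carrier_mat d d"
  shows "kron (A*B) (cconj (A*B)) = kron A (cconj A) * kron B (cconj B)"
  unfolding cconj_mult[OF A B] by (rule kron_mult[of _ d d _ d _ d]) (use A B in auto)

lemma K_transpose: "kron (transpose_mat A) (cconj (transpose_mat A)) = transpose_mat (kron A (cconj A))"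
  by (simp add: cconj_transpose transpose_kron)

lemma minus_telescope: assumes "A \<in> carrier_mat r c" "B \<in> carrier_mat r c" "C \<in> carrier_mat r c"
  shows "A - C = (A - B) + (B - (C :: complex mat))"
  by (rule eq_matI) (use assms in auto)

theorem lemma7:
  fixes n :: nat and U V :: "complex mat" and \<epsilon> :: real
  assumes "unitary (2 ^ n) U" and "unitary (2 ^ n) V"
    and "Dist U V \<le> \<epsilon>"
    and "P \<in> pauli_group n"
  shows "Dist (U * P * transpose_mat U) (V * P * transpose_mat V) \<le> 2 * \<epsilon>"
proof -
  define d where "d = (2::nat) ^ n"
  have uU: "unitary d U" and uV: "unitary d V" and uP: "unitary d P"
    using assms unitary_pauli d_def by auto
  have Uc: "U \<in> carrier_mat d d" and Vc: "V \<in> carrier_mat d d" and Pc: "P \<in> carrier_mat d d"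
    using uU uV uP unitaryD by auto
  define KU where "KU = kron U (cconj U)"
  define KV where "KV = kron V (cconj V)"
  define KP where "KP = kron P (cconj P)"
  have uKU: "unitary (d*d) KU" unfolding KU_def by (rule unitary_kron[OF uU unitary_cconj[OF uU]])
  have uKV: "unitary (d*d) KV" unfolding KV_def by (rule unitary_kron[OF uV unitary_cconj[OF uV]])
  have uKP: "unitary (d*d) KP" unfolding KP_def by (rule unitary_kron[OF uP unitary_cconj[OF uP]])
  have KUc: "KU \<in> carrier_mat (d*d) (d*d)" and KVc: "KV \<in> carrier_mat (d*d) (d*d)"
    and KPc: "KP \<in> carrier_mat (d*d) (d*d)" using uKU uKV uKP unitaryD by auto
  have tKUc: "transpose_mat KU \<in> carrier_mat (d*d) (d*d)" and tKVc: "transpose_mat KV \<in> carrier_mat (d*d) (d*d)"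
    using KUc KVc by auto
  have e1: "kron (U * P * transpose_mat U) (cconj (U * P * transpose_mat U)) = KU * KP * transpose_mat KU"
    using K_mult[of "U*P" d "transpose_mat U"] K_mult[OF Uc Pc] Uc Pc
    unfolding KU_def KP_def K_transpose by simp
  have e2: "kron (V * P * transpose_mat V) (cconj (V * P * transpose_mat V)) = KV * KP * transpose_mat KV"
    using K_mult[of "V*P" d "transpose_mat V"] K_mult[OF Vc Pc] Vc Pc
    unfolding KV_def KP_def K_transpose by simp
  define X where "X = KU * KP"
  define Y where "Y = KP * transpose_mat KV"
  have uX: "unitary (d*d) X" unfolding X_def by (rule unitary_mult[OF uKU uKP])
  have uY: "unitary (d*d) Y" unfolding Y_def by (rule unitary_mult[OF uKP unitary_transpose[OF uKV]])
  have Xc: "X \<in> carrier_mat (d*d) (d*d)" and Yc: "Y \<in> carrier_mat (d*d) (d*d)" using uX uY unitaryD by auto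
  have mid: "X * transpose_mat KV = KU * Y"
    unfolding X_def Y_def using KUc KPc tKVc by simp
  have dec: "KU * KP * transpose_mat KU - KV * KP * transpose_mat KV
      = X * (transpose_mat KU - transpose_mat KV) + (KU - KV) * Y"
  proof -
    have "X * (transpose_mat KU - transpose_mat KV) = X * transpose_mat KU - X * transpose_mat KV"
      using Xc tKUc tKVc by (rule mult_minus_distrib_mat)
    moreover have "(KU - KV) * Y = KU * Y - KV * Y"
      using KUc KVc Yc by (rule minus_mult_distrib_mat)
    moreover have "KV * Y = KV * KP * transpose_mat KV" unfolding Y_def using KVc KPc tKVc by simp
    moreover have "X * transpose_mat KU = KU * KP * transpose_mat KU" unfolding X_def by simp
    moreover have "X * transpose_mat KU \<in> carrier_mat (d*d) (d*d)" "KU * Y \<in> carrier_mat (d*d) (d*d)"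
      "KV * Y \<in> carrier_mat (d*d) (d*d)" using Xc tKUc KUc Yc KVc by auto
    ultimately show ?thesis using minus_telescope mid by metis
  qed
  have A1: "X * (transpose_mat KU - transpose_mat KV) \<in> carrier_mat (d*d) (d*d)" using Xc tKUc tKVc by auto
  have A2: "(KU - KV) * Y \<in> carrier_mat (d*d) (d*d)" using KUc KVc Yc by auto
  have "frob (KU * KP * transpose_mat KU - KV * KP * transpose_mat KV)
      \<le> frob (X * (transpose_mat KU - transpose_mat KV)) + frob ((KU - KV) * Y)"
    unfolding dec by (rule frob_triangle[OF A1 A2])
  also have "frob (X * (transpose_mat KU - transpose_mat KV)) = frob (transpose_mat KU - transpose_mat KV)"
    by (rule frob_left_unitary[OF uX]) (use tKUc tKVc in auto)
  also have "transpose_mat KU - transpose_mat KV = transpose_mat (KU - KV)"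
    using transpose_minus[OF KUc KVc] by simp
  also have "frob (transpose_mat (KU - KV)) = frob (KU - KV)" by (rule frob_transpose)
  also have "frob ((KU - KV) * Y) = frob (KU - KV)"
    by (rule frob_right_unitary[OF uY]) (use KUc KVc in auto)
  finally have F: "frob (KU * KP * transpose_mat KU - KV * KP * transpose_mat KV) \<le> 2 * frob (KU - KV)" by simp
  have dr: "dim_row (U * P * transpose_mat U) = dim_row U" by simp
  have pos: "sqrt (2 * (real (dim_row U))^2) > 0" using Uc d_def by auto
  have "Dist (U * P * transpose_mat U) (V * P * transpose_mat V)
        = frob (KU * KP * transpose_mat KU - KV * KP * transpose_mat KV) / sqrt (2 * (real (dim_row U))^2)"
    unfolding Dist_def e1 e2 dr ..
  also have "\<dots> \<le> 2 * frob (KU - KV) / sqrt (2 * (real (dim_row U))^2)"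
    using F pos by (simp add: divide_right_mono)
  also have "\<dots> = 2 * Dist U V" unfolding Dist_def KU_def KV_def by simp
  also have "\<dots> \<le> 2 * \<epsilon>" using assms(3) by simp
  finally show ?thesis .
qed

end
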